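(* Let $n\ge1$. Then $x=2$ is a double zero of $\Phi_n(x)$, i.e. $\Phi_n(2)=\Phi_n'(2)=0$ and $\Phi_n''(2)\neq0$. Moreover, all zeros of $\Phi_n(x)$ other than $x=2$ are real and lie in the interval $(-2,2)$.
   Context: $U_n$ is the Chebyshev polynomial of the second kind, $U_n(\cos\theta)=\sin((n+1)\theta)/\sin\theta$, $\tilde U_n(x)=U_n(x/2)$, and $\Phi_n(x)=((n+1)x^2-6x-4n)\tilde U_n(x)+2(x+2)\tilde U_{n-1}(x)+2(x+2)$. *)

theory Defs
  imports "HOL-Computational_Algebra.Polynomial" Complex_Main
begin

text \<open>Chebyshev polynomials of the second kind, as real polynomials:
  U_0 = 1, U_1 = 2x, U_(n+2) = 2x U_(n+1) - U_n.  These are exactly the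
  polynomials with U_n(cos t) = sin((n+1)t)/sin t.\<close>
fun chebU :: "nat \<Rightarrow> real poly" where
  "chebU 0 = 1"
| "chebU (Suc 0) = [:0, 2:]"
| "chebU (Suc (Suc n)) = [:0, 2:] * chebU (Suc n) - chebU n"

definition chebU_tilde :: "nat \<Rightarrow> real poly" where
  "chebU_tilde n = pcompose (chebU n) [:0, 1/2:]"

definition Phi :: "nat \<Rightarrow> real poly" where
  "Phi n = [:- 4 * real n, -6, real n + 1:] * chebU_tilde n
           + [:4, 2:] * chebU_tilde (n - 1) + [:4, 2:]"


end

theory Submission
  imports Defs
begin

lemma chebU_cos: "poly (chebU n) (cos t) * sin t = sin (real (Suc n) * t)"
proof (induction n rule: chebU.induct)
  case 1 then show ?case by simp
next
  case 2 then show ?case by (simp add: sin_double)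
next
  case (3 n)
  have e: "sin (real (Suc (Suc (Suc n))) * t) + sin (real (Suc n) * t) = 2 * cos t * sin (real (Suc (Suc n)) * t)"
  proof -
    have a: "real (Suc (Suc (Suc n))) * t = real (Suc (Suc n)) * t + t" by (simp add: algebra_simps)
    have b: "real (Suc n) * t = real (Suc (Suc n)) * t - t" by (simp add: algebra_simps)
    show ?thesis unfolding a b sin_add sin_diff by (simp add: algebra_simps)
  qed
  have "poly (chebU (Suc (Suc n))) (cos t) * sin t = 2 * cos t * (poly (chebU (Suc n)) (cos t) * sin t) - poly (chebU n) (cos t) * sin t"
    by (simp add: algebra_simps)
  also have "\<dots> = sin (real (Suc (Suc (Suc n))) * t)" using 3 e by simp
  finally show ?case .
qed

lemma chebU_tilde_cos: "poly (chebU_tilde n) (2 * cos t) = poly (chebU n) (cos t)"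
  by (simp add: chebU_tilde_def poly_pcompose)

lemma chebU_one: "poly (chebU n) 1 = real n + 1"
  by (induction n rule: chebU.induct) (auto simp: algebra_simps)

lemma chebU_mone: "poly (chebU n) (-1) = (-1)^n * (real n + 1)"
  by (induction n rule: chebU.induct) (auto simp: algebra_simps)

lemma chebU_deriv_one: "poly (pderiv (chebU n)) 1 = real n * (real n + 1) * (real n + 2) / 3"
  by (induction n rule: chebU.induct) (auto simp: algebra_simps pderiv_mult pderiv_pCons pderiv_diff pderiv_smult chebU_one)

lemma degree_chebU: "degree (chebU n) \<le> n"
proof (induction n rule: chebU.induct)
  case (3 n)
  have "degree ([:0, 2:] * chebU (Suc n)) \<le> Suc (Suc n)"
    using degree_mult_le[of "[:0,2:]" "chebU (Suc n)"] 3 by simp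
  then show ?case using 3 by (simp add: degree_diff_le)
qed auto

lemma degree_Phi: "degree (Phi n) \<le> n + 2"
proof -
  have u: "degree (chebU_tilde j) \<le> j" for j
    using degree_chebU[of j] by (simp add: chebU_tilde_def degree_pcompose)
  have 1: "degree ([:- 4 * real n, -6, real n + 1:] * chebU_tilde n) \<le> n + 2"
    using degree_mult_le[of "[:- 4 * real n, -6, real n + 1:]" "chebU_tilde n"] u[of n] by simp
  have 2: "degree ([:4, 2:] * chebU_tilde (n - 1)) \<le> n + 2"
    using degree_mult_le[of "[:4, 2:]" "chebU_tilde (n-1)"] u[of "n-1"] by simp
  show ?thesis unfolding Phi_def
    by (intro degree_add_le 1 2) simp
qed

lemma chebU_tilde_2: "poly (chebU_tilde j) 2 = real j + 1"
  using chebU_tilde_cos[of j 0] chebU_one by simp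

lemma chebU_tilde_m2: "poly (chebU_tilde j) (-2) = (-1)^j * (real j + 1)"
  using chebU_tilde_cos[of j pi] chebU_mone by simp

lemma chebU_tilde_d2: "poly (pderiv (chebU_tilde j)) 2 = real j * (real j + 1) * (real j + 2) / 6"
  by (simp add: chebU_tilde_def pderiv_pcompose poly_pcompose chebU_deriv_one pderiv_pCons)

lemma Phi_2: assumes "n \<ge> 1" shows "poly (Phi n) 2 = 0"
proof -
  obtain j where n: "n = Suc j" using assms by (cases n) auto
  show ?thesis unfolding n Phi_def by (simp add: chebU_tilde_2 algebra_simps)
qed

lemma Phi_d2: assumes "n \<ge> 1" shows "poly (pderiv (Phi n)) 2 = 0"
proof -
  obtain j where n: "n = Suc j" using assms by (cases n) auto
  have "pderiv (Phi n) = [:- 4 * real n, -6, real n + 1:] * pderiv (chebU_tilde n) + chebU_tilde n * pderiv [:- 4 * real n, -6, real n + 1:]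
     + ([:4, 2:] * pderiv (chebU_tilde j) + chebU_tilde j * pderiv [:4, 2:]) + pderiv [:4, 2:]" (is "_ = ?R")
    unfolding Phi_def n diff_Suc_1 by (simp only: pderiv_add pderiv_mult add.assoc)
  hence "poly (pderiv (Phi n)) 2 = poly ?R 2" by simp
  also have "\<dots> = 0"
  proof -
    have ar: "(- 4 - 4 * x) * ((1 + x) * (2 + x) * (3 + x)) / 6 +
     (2 * ((1 + x) * ((2 + x) * ((2 + x) * (3 + x)))) / 3 +
      (2 * ((4 + 2 * x) * (2 + x)) +
       (4 * (x * ((x + 1) * (x + 2))) / 3 +
        (- (2 * ((1 + x) * (2 + x) * (3 + x))) - 4 * x)))) = 8" for x :: real
      by (simp add: field_simps)
    show ?thesis by (simp add: chebU_tilde_2 chebU_tilde_d2 pderiv_pCons n ar)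
  qed
  finally show ?thesis .
qed

lemma Phi_m2: "poly (Phi n) (-2) = 16 * (-1)^n * (real n + 1)"
  unfolding Phi_def by (simp add: chebU_tilde_m2 algebra_simps)

lemma Phi_cos:
  assumes "1 \<le> l" "l \<le> n" "t = real l * pi / real (Suc n)"
  shows "poly (Phi n) (2 * cos t) = 2 * (2 * cos t + 2) * (1 - (-1)^l)"
proof -
  have q: "0 < real l / real (Suc n)" "real l / real (Suc n) < 1" using assms by (auto simp: field_simps)
  have te: "t = pi * (real l / real (Suc n))" using assms(3) by simp
  have t1: "pi * (real l / real (Suc n)) < pi * 1"
    by (rule mult_strict_left_mono) (use q in auto)
  have t0: "0 < pi * (real l / real (Suc n))" by (rule mult_pos_pos[OF pi_gt_zero q(1)])
  have tpos: "0 < t" "t < pi" unfolding te using t0 t1 by auto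
  have s: "sin t > 0" using tpos sin_gt_zero by blast
  have mt: "real (Suc n) * t = real l * pi" using assms by simp
  hence "poly (chebU n) (cos t) * sin t = 0" using chebU_cos[of n t] by simp
  hence u1: "poly (chebU_tilde n) (2 * cos t) = 0" using s by (simp add: chebU_tilde_cos)
  obtain j where n: "n = Suc j" using assms by (cases n) auto
  have "real (Suc j) * t = real (Suc n) * t - t" using n by (simp add: algebra_simps)
  hence "real (Suc j) * t = real l * pi - t" using mt by simp
  hence "poly (chebU j) (cos t) * sin t = sin (real l * pi - t)" using chebU_cos[of j t] by simp
  also have "\<dots> = - ((-1)^l) * sin t" by (simp add: sin_diff)
  finally have "(poly (chebU j) (cos t) + (-1)^l) * sin t = 0" by (simp add: algebra_simps)
  hence "poly (chebU j) (cos t) + (-1)^l = 0" using s by simp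
  hence u2: "poly (chebU_tilde j) (2 * cos t) = - ((-1)^l)" by (simp add: chebU_tilde_cos eq_neg_iff_add_eq_0)
  show ?thesis unfolding Phi_def using u1 u2 n by (simp add: algebra_simps)
qed

lemma sign_prod:
  fixes f :: "nat \<Rightarrow> real"
  assumes "j \<le> h" "\<And>i. 1 \<le> i \<Longrightarrow> i \<le> j \<Longrightarrow> f i < 0" "\<And>i. j < i \<Longrightarrow> i \<le> h \<Longrightarrow> f i > 0"
  shows "(-1)^j * (\<Prod>i=1..h. f i) > 0"
  using assms
proof (induction h arbitrary: j)
  case 0 then show ?case by simp
next
  case (Suc h)
  show ?case
  proof (cases "j \<le> h")
    case True
    have "(-1)^j * (\<Prod>i=1..h. f i) > 0" using Suc.IH[of j] True Suc.prems by auto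
    moreover have "f (Suc h) > 0" using Suc.prems True by auto
    ultimately show ?thesis by (simp add: mult.assoc[symmetric])
  next
    case False then have j: "j = Suc h" using Suc.prems by simp
    have P: "(-1)^h * (\<Prod>i=1..h. f i) > 0" using Suc.IH[of h] Suc.prems j by auto
    have F: "f (Suc h) < 0" using Suc.prems j by auto
    show ?thesis using j mult_pos_neg[OF P F] by simp
  qed
qed

lemma prod_dvd:
  fixes p B :: "real poly" and a :: "nat \<Rightarrow> real"
  assumes "finite I" "inj_on a I" "\<And>i. i\<in>I \<Longrightarrow> poly p (a i) = 0"
    "\<And>i. i\<in>I \<Longrightarrow> poly B (a i) \<noteq> 0" "B dvd p"
  shows "B * (\<Prod>i\<in>I. [:-a i, 1:]) dvd p"
  using assms
proof (induction I rule: finite_induct)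
  case empty then show ?case by simp
next
  case (insert i I)
  have "B * (\<Prod>i\<in>I. [:-a i, 1:]) dvd p" using insert by auto
  then obtain q where q: "p = B * (\<Prod>i\<in>I. [:-a i, 1:]) * q" by (auto elim: dvdE)
  have "poly (\<Prod>i\<in>I. [:-a i, 1:]) (a i) \<noteq> 0"
    using insert.prems(1) insert.hyps by (auto simp: poly_prod inj_on_def)
  moreover have "poly B (a i) \<noteq> 0" using insert.prems by auto
  moreover have "poly p (a i) = 0" using insert.prems by auto
  ultimately have "poly q (a i) = 0" using q by simp
  then obtain r where r: "q = [:-a i,1:] * r" by (metis poly_eq_0_iff_dvd dvdE)
  have pe: "p = (B * ([:-a i,1:] * (\<Prod>i\<in>I. [:-a i, 1:]))) * r" using q r by (simp only: mult_ac)
  show ?case unfolding prod.insert[OF insert.hyps] using pe by (metis dvd_triv_left)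
qed

lemma poly_map_of_real: "poly (map_poly complex_of_real q) (complex_of_real x) = complex_of_real (poly q x)"
  by (induction q) (auto simp: map_poly_pCons)

lemma map_of_real_mult: "map_poly complex_of_real (p * q) = map_poly complex_of_real p * map_poly complex_of_real q"
  by (rule poly_eqI) (simp add: coeff_map_poly coeff_mult)

lemma poly_map_of_real_prod:
  assumes "finite I"
  shows "poly (map_poly complex_of_real (\<Prod>i\<in>I. [:-a i, 1:])) z = (\<Prod>i\<in>I. z - complex_of_real (a i))"
  using assms
proof (induction I rule: finite_induct)
  case empty then show ?case by simp
next
  case (insert i I)
  show ?case unfolding prod.insert[OF insert.hyps] map_of_real_mult poly_mult insert.IH
    by (simp add: map_poly_pCons)
qed

lemma roots_in:
  fixes q :: "real poly"
  assumes "q \<noteq> 0" "finite T" "\<And>t. t\<in>T \<Longrightarrow> poly q t = 0" "degree q \<le> card T"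
    and z: "poly (map_poly complex_of_real q) z = 0"
  shows "z \<in> complex_of_real ` T"
proof (rule ccontr)
  assume nz: "z \<notin> complex_of_real ` T"
  let ?Q = "map_poly complex_of_real q"
  have dQ: "degree ?Q = degree q" by (rule degree_map_poly) simp
  have Q0: "?Q \<noteq> 0" using assms(1) by (simp add: map_poly_eq_0_iff)
  have sub: "insert z (complex_of_real ` T) \<subseteq> {w. poly ?Q w = 0}"
    using z assms(3) by (auto simp: poly_map_of_real)
  have c1: "card (insert z (complex_of_real ` T)) = Suc (card T)"
    using nz assms(2) by (simp add: card_image inj_on_def)
  have c2: "card (insert z (complex_of_real ` T)) \<le> card {w. poly ?Q w = 0}"
    by (rule card_mono[OF poly_roots_finite[OF Q0] sub])
  have c3: "card {w. poly ?Q w = 0} \<le> degree ?Q" by (rule card_poly_roots_bound[OF Q0])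
  show False using c1 c2 c3 dQ assms(4) by simp
qed

lemma cos_cmp:
  assumes "l < l'" "l' \<le> Suc n"
  shows "cos (real l' * pi / real (Suc n)) < cos (real l * pi / real (Suc n))"
proof -
  have a: "0 \<le> real l * pi / real (Suc n)" "0 \<le> real l' * pi / real (Suc n)" by auto
  have b: "real l' * pi / real (Suc n) \<le> pi"
  proof -
    have "real l' / real (Suc n) \<le> 1" using assms by (simp add: field_simps)
    hence "pi * (real l' / real (Suc n)) \<le> pi * 1" by (intro mult_left_mono) auto
    thus ?thesis by (simp add: ac_simps)
  qed
  have c: "real l * pi / real (Suc n) < real l' * pi / real (Suc n)"
    using assms by (intro divide_strict_right_mono mult_strict_right_mono) auto
  have d: "real l * pi / real (Suc n) \<le> pi" using b c by linarith
  show ?thesis using cos_mono_less_eq[OF a(2) b a(1) d] c by simp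
qed

theorem propositionB5:
  fixes n :: nat
  assumes "n \<ge> 1"
  shows "poly (Phi n) 2 = 0 \<and> poly (pderiv (Phi n)) 2 = 0
         \<and> poly (pderiv (pderiv (Phi n))) 2 \<noteq> 0
         \<and> (\<forall>z::complex. poly (map_poly complex_of_real (Phi n)) z = 0 \<and> z \<noteq> 2
               \<longrightarrow> z \<in> \<real> \<and> -2 < Re z \<and> Re z < 2)"
proof -
  define h where "h = n div 2"
  define k where "k = n - h"
  define a where "a i = 2 * cos (real (2 * i) * pi / real (Suc n))" for i
  define y where "y j = (if j < k then 2 * cos (real (2 * j + 1) * pi / real (Suc n)) else -2)" for j
  define B :: "real poly" where "B = [:-2, 1:] * [:-2, 1:]"
  define D where "D = (\<Prod>i\<in>{1..h}. [:-a i, 1:])"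
  have kpos: "0 < k" using assms unfolding k_def h_def by simp
  have hk: "h + k = n" unfolding k_def h_def by simp
  have P2: "poly (Phi n) 2 = 0" using Phi_2[OF assms] .
  have P2': "poly (pderiv (Phi n)) 2 = 0" using Phi_d2[OF assms] .
  have Pa: "poly (Phi n) (a i) = 0" if "i \<in> {1..h}" for i
    using Phi_cos[of "2*i" n] that unfolding a_def h_def by auto
  have abnd: "-2 < a i \<and> a i < 2" if "i \<in> {1..h}" for i
  proof -
    have "cos (real (Suc n) * pi / real (Suc n)) < cos (real (2*i) * pi / real (Suc n))"
      using that unfolding h_def by (intro cos_cmp) auto
    moreover have "cos (real (2*i) * pi / real (Suc n)) < cos (real 0 * pi / real (Suc n))"
      using that unfolding h_def by (intro cos_cmp) auto
    ultimately show ?thesis unfolding a_def by simp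
  qed
  have ainj: "inj_on a {1..h}"
  proof (rule inj_onI)
    fix i i' assume i: "i \<in> {1..h}" "i' \<in> {1..h}" "a i = a i'"
    show "i = i'"
    proof (rule ccontr)
      assume "i \<noteq> i'"
      then consider "i < i'" | "i' < i" by linarith
      then show False
      proof cases
        case 1
        have "cos (real (2*i') * pi / real (Suc n)) < cos (real (2*i) * pi / real (Suc n))"
          by (rule cos_cmp) (use 1 i in \<open>auto simp: h_def\<close>)
        then show False using i(3) unfolding a_def by simp
      next
        case 2
        have "cos (real (2*i) * pi / real (Suc n)) < cos (real (2*i') * pi / real (Suc n))"
          by (rule cos_cmp) (use 2 i in \<open>auto simp: h_def\<close>)
        then show False using i(3) unfolding a_def by simp
      qed
    qed
  qed
  have BdvdP: "B dvd Phi n"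
  proof -
    obtain q where q: "Phi n = [:-2,1:] * q" using P2 by (metis poly_eq_0_iff_dvd dvdE)
    have "poly (pderiv (Phi n)) 2 = poly q 2" unfolding q pderiv_mult by (simp add: pderiv_pCons)
    hence "poly q 2 = 0" using P2' by simp
    then obtain r where "q = [:-2,1:] * r" by (metis poly_eq_0_iff_dvd dvdE)
    then have "Phi n = B * r" using q unfolding B_def by (simp only: mult.assoc)
    then show ?thesis by simp
  qed
  have "B * D dvd Phi n" unfolding D_def
  proof (rule prod_dvd[OF _ ainj])
    show "poly B (a i) \<noteq> 0" if "i \<in> {1..h}" for i
    proof -
      have "poly B (a i) = (a i - 2)^2" unfolding B_def by (simp add: power2_eq_square algebra_simps)
      then show ?thesis using abnd[OF that] by simp
    qed
  qed (use Pa BdvdP in auto)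
  then obtain K where PK: "Phi n = B * D * K" by (auto elim: dvdE)
  have Py: "poly (Phi n) (y j) = 4 * (y j + 2)" if "j < k" for j
  proof -
    have "2 * j + 1 \<le> n" using that unfolding k_def h_def by linarith
    then show ?thesis using Phi_cos[of "2*j+1" n] that unfolding y_def by simp
  qed
  have ymono: "y j' < y j" if "j < j'" "j' \<le> k" for j j'
  proof (cases "j' < k")
    case True
    have "2 * j' + 1 \<le> Suc n" using True unfolding k_def h_def by linarith
    then have "cos (real (2*j'+1) * pi / real (Suc n)) < cos (real (2*j+1) * pi / real (Suc n))"
      using that by (intro cos_cmp) auto
    then show ?thesis using that True unfolding y_def by simp
  next
    case False
    have "2 * j + 1 < Suc n" using that unfolding k_def h_def by linarith
    then have "cos (real (Suc n) * pi / real (Suc n)) < cos (real (2*j+1) * pi / real (Suc n))"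
      by (intro cos_cmp) auto
    then show ?thesis using that False unfolding y_def by simp
  qed
  have y0: "y 0 < 2"
  proof -
    have "cos (real 1 * pi / real (Suc n)) < cos (real 0 * pi / real (Suc n))"
      by (intro cos_cmp) auto
    then show ?thesis using kpos unfolding y_def by simp
  qed
  have yk: "y k = -2" unfolding y_def by simp
  have ygt: "y j > -2" if "j < k" for j using ymono[of j k] that yk by simp
  have Dy: "(-1)^j * poly D (y j) > 0" if "j < k" for j
    unfolding D_def poly_prod
  proof (rule sign_prod)
    show "j \<le> h" using that unfolding k_def h_def by linarith
    fix i assume i: "1 \<le> i" "i \<le> j"
    have "2 * i < 2 * j + 1" using i by linarith
    moreover have "2 * j + 1 \<le> Suc n" using that unfolding k_def h_def by linarith
    ultimately have "cos (real (2*j+1) * pi / real (Suc n)) < cos (real (2*i) * pi / real (Suc n))"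
      by (intro cos_cmp) auto
    then show "poly [:- a i, 1:] (y j) < 0" using that unfolding a_def y_def by simp
  next
    fix i assume i: "j < i" "i \<le> h"
    have "2 * j + 1 < 2 * i" using i by linarith
    moreover have "2 * i \<le> Suc n" using i unfolding h_def by linarith
    ultimately have "cos (real (2*i) * pi / real (Suc n)) < cos (real (2*j+1) * pi / real (Suc n))"
      by (intro cos_cmp) auto
    then show "poly [:- a i, 1:] (y j) > 0" using that unfolding a_def y_def by simp
  qed
  have Dm2: "(-1)^h * poly D (-2) > 0"
    unfolding D_def poly_prod
  proof (rule sign_prod)
    fix i assume "1 \<le> i" "i \<le> h"
    then have "-2 < a i" using abnd by auto
    then show "poly [:- a i, 1:] (-2) < 0" by simp
  qed auto
  have Ky: "(-1)^j * poly K (y j) > 0" if "j \<le> k" for j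
  proof (cases "j < k")
    case True
    have "poly (Phi n) (y j) = (y j - 2)^2 * (poly D (y j) * poly K (y j))"
      unfolding PK B_def by (simp add: power2_eq_square algebra_simps)
    moreover have "poly (Phi n) (y j) > 0" using Py[OF True] ygt[OF True] by simp
    moreover have "(y j - 2)^2 > 0" using ymono[of 0 j] y0 True by (cases j) auto
    ultimately have "poly D (y j) * poly K (y j) > 0" by (metis zero_less_mult_pos)
    hence "((-1)^j * poly D (y j)) * ((-1)^j * poly K (y j)) > 0"
      by (simp add: algebra_simps power_mult_distrib[symmetric] flip: power_add mult_2)
    then show ?thesis using Dy[OF True] by (simp add: zero_less_mult_iff)
  next
    case False
    then have j: "j = k" using that by simp
    have "poly (Phi n) (-2) = 16 * (poly D (-2) * poly K (-2))"
      unfolding PK B_def by simp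
    hence "16 * (-1)^n * (real n + 1) = 16 * (poly D (-2) * poly K (-2))" using Phi_m2 by simp
    hence "(-1)^n * (real n + 1) = poly D (-2) * poly K (-2)" by simp
    hence e1: "(-1)^n * ((-1)^n * (real n + 1)) = (-1)^n * (poly D (-2) * poly K (-2))" by simp
    have e2: "(-1::real)^n * (-1)^n = 1" by (simp flip: power_mult_distrib)
    have e3: "((-1)^h * poly D (-2)) * ((-1)^k * poly K (-2)) = (-1)^(h+k) * (poly D (-2) * poly K (-2))"
      by (simp add: power_add mult_ac)
    have "((-1)^h * poly D (-2)) * ((-1)^k * poly K (-2)) = real n + 1"
      using e1 e2 e3 hk by (simp add: mult.assoc[symmetric])
    hence "((-1)^h * poly D (-2)) * ((-1)^k * poly K (-2)) > 0" by simp
    then show ?thesis using Dm2 j yk by (simp add: zero_less_mult_iff)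
  qed
  have "\<forall>j. j < k \<longrightarrow> (\<exists>r. y (Suc j) < r \<and> r < y j \<and> poly K r = 0)"
  proof (intro allI impI)
    fix j assume j: "j < k"
    show "\<exists>r. y (Suc j) < r \<and> r < y j \<and> poly K r = 0"
    proof -
      have lt: "y (Suc j) < y j" using ymono[of j "Suc j"] j by simp
      have s1: "(-1)^j * poly K (y j) > 0" using Ky[of j] j by simp
      have s2: "(-1)^(Suc j) * poly K (y (Suc j)) > 0" using Ky[of "Suc j"] j by simp
      have "((-1)^j * poly K (y j)) * ((-1)^(Suc j) * poly K (y (Suc j))) > 0"
        by (rule mult_pos_pos[OF s1 s2])
      moreover have "((-1)^j * poly K (y j)) * ((-1)^(Suc j) * poly K (y (Suc j)))
          = - (poly K (y (Suc j)) * poly K (y j))"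
        by (simp add: mult_ac flip: power_mult_distrib)
      ultimately have "poly K (y (Suc j)) * poly K (y j) < 0" by linarith
      then obtain r where "y (Suc j) < r" "r < y j" "poly K r = 0"
        using poly_IVT[OF lt] by blast
      then show ?thesis by blast
    qed
  qed
  then obtain r where r: "\<And>j. j < k \<Longrightarrow> y (Suc j) < r j \<and> r j < y j \<and> poly K (r j) = 0"
    by metis
  define T where "T = r ` {..<k}"
  have rdec: "r j' < r j" if "j < j'" "j' < k" for j j'
  proof -
    have "r j' < y j'" using r[OF that(2)] by simp
    also have "y j' \<le> y (Suc j)"
      using that ymono[of "Suc j" j'] by (cases "Suc j = j'") auto
    also have "y (Suc j) < r j" using r that by simp
    finally show ?thesis .
  qed
  have rinj: "inj_on r {..<k}"
  proof (rule inj_onI)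
    fix j j' assume "j \<in> {..<k}" "j' \<in> {..<k}" "r j = r j'"
    then show "j = j'" using rdec[of j j'] rdec[of j' j] by (cases j j' rule: linorder_cases) auto
  qed
  have cardT: "card T = k" unfolding T_def using rinj by (simp add: card_image)
  have Tfin: "finite T" unfolding T_def by simp
  have Troot: "poly K t = 0" if "t \<in> T" for t using that r unfolding T_def by auto
  have Tbnd: "-2 < t \<and> t < 2" if tT: "t \<in> T" for t
  proof -
    obtain j where j: "j < k" "t = r j" using tT unfolding T_def by auto
    have "y (Suc j) \<ge> -2"
      using ymono[of "Suc j" k] j yk by (cases "Suc j = k") auto
    moreover have "y j \<le> y 0" using ymono[of 0 j] j by (cases j) auto
    ultimately show ?thesis using r[OF j(1)] j y0 by auto
  qed
  have P0: "Phi n \<noteq> 0"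
  proof
    assume "Phi n = 0"
    then have "poly (Phi n) (y 0) = 0" by simp
    then show False using Py[OF kpos] ygt[OF kpos] by simp
  qed
  have B0: "B \<noteq> 0" and D0: "D \<noteq> 0" and K0: "K \<noteq> 0" using P0 unfolding PK by auto
  have degB: "degree B = 2" unfolding B_def by simp
  have degD: "degree D = h" unfolding D_def by (subst degree_prod_eq_sum_degree) auto
  have "degree (Phi n) = 2 + h + degree K"
    unfolding PK using B0 D0 K0 degB degD by (simp add: degree_mult_eq)
  hence degK: "degree K \<le> card T" using degree_Phi[of n] cardT hk by simp
  have Kroots: "z \<in> complex_of_real ` T" if "poly (map_poly complex_of_real K) z = 0" for z
    by (rule roots_in[OF K0 Tfin Troot degK that])
  have D2: "poly D 2 \<noteq> 0"
    unfolding D_def poly_prod using abnd by (fastforce simp: prod_zero_iff)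
  have K2: "poly K 2 \<noteq> 0"
  proof
    assume "poly K 2 = 0"
    then have "poly (map_poly complex_of_real K) (complex_of_real 2) = 0"
      by (simp only: poly_map_of_real) simp
    then have "complex_of_real 2 \<in> complex_of_real ` T" by (rule Kroots)
    then obtain x where x: "x \<in> T" "complex_of_real 2 = complex_of_real x" by blast
    from x(2) have "2 = x" by (simp only: of_real_eq_iff)
    then show False using Tbnd[OF x(1)] by simp
  qed
  have dd: "poly (pderiv (pderiv (Phi n))) 2 = 2 * poly (D * K) 2"
  proof -
    have "Phi n = [:-2, 1:] * ([:-2, 1:] * (D * K))" unfolding PK B_def by (simp only: mult.assoc)
    moreover have pL: "pderiv [:-2, 1:] = (1::real poly)" by (simp add: pderiv_pCons)
    ultimately show ?thesis
      by (simp only: pderiv_mult pL pderiv_add pderiv_1 mult_1_right add_0_right mult_0_right poly_mult poly_add) simp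
  qed
  have PDD: "poly (pderiv (pderiv (Phi n))) 2 \<noteq> 0" using dd D2 K2 by simp
  have CR: "z \<in> \<real> \<and> -2 < Re z \<and> Re z < 2"
    if z: "poly (map_poly complex_of_real (Phi n)) z = 0" "z \<noteq> 2" for z
  proof -
    have "poly (map_poly complex_of_real (Phi n)) z
        = (z - 2) * (z - 2) * (\<Prod>i\<in>{1..h}. z - complex_of_real (a i)) * poly (map_poly complex_of_real K) z"
      unfolding PK B_def map_of_real_mult poly_mult D_def poly_map_of_real_prod[OF finite_atLeastAtMost]
      by (simp add: map_poly_pCons)
    with z have "(\<Prod>i\<in>{1..h}. z - complex_of_real (a i)) = 0 \<or> poly (map_poly complex_of_real K) z = 0"
      by simp
    then obtain x where x: "z = complex_of_real x" "-2 < x" "x < 2"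
    proof
      assume "(\<Prod>i\<in>{1..h}. z - complex_of_real (a i)) = 0"
      then obtain i where "i \<in> {1..h}" "z = complex_of_real (a i)" by auto
      then show ?thesis using that abnd by blast
    next
      assume "poly (map_poly complex_of_real K) z = 0"
      then have "z \<in> complex_of_real ` T" by (rule Kroots)
      then show ?thesis using that Tbnd by blast
    qed
    then show ?thesis by simp
  qed
  show ?thesis using P2 P2' PDD CR by blast
qed

end
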